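(* There exist absolute constants $C,\bar C$ such that for all $n\ge1$ and $d\ge C$, with $S_n^d=\sum_{\ell=1}^dP_n^\ell$ where $P_n^\ell(i,j)=\mathbf 1(\pi_n^\ell(i)=j)$ for independent uniformly random permutations $\pi_n^1,\dots,\pi_n^d$ of $[n]$: (i) $\mathbb P\big(\operatorname{Tr}S_n^d(S_n^d)^*\ge nd+xd^2\big)\le d\,e^{-d(x-e)}$ for all $x\ge e$; (ii) $\mathbb E\operatorname{Tr}\big(S_n^d(S_n^d)^*\big)^2\le 2nd^2+\bar Cd^4$. *)

theory Defs
  imports "HOL-Probability.Probability" "HOL-Combinatorics.Permutations"
begin

definition rand_perms :: "nat \<Rightarrow> nat \<Rightarrow> (nat \<Rightarrow> nat \<Rightarrow> nat) pmf" where
  "rand_perms n d = Pi_pmf {..<d} id (\<lambda>_. pmf_of_set {\<pi>. \<pi> permutes {..<n}})"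

definition Smat :: "nat \<Rightarrow> (nat \<Rightarrow> nat \<Rightarrow> nat) \<Rightarrow> nat \<Rightarrow> nat \<Rightarrow> real" where
  "Smat d \<pi> i j = (\<Sum>l<d. if \<pi> l i = j then 1 else 0)"

definition SSt :: "nat \<Rightarrow> nat \<Rightarrow> (nat \<Rightarrow> nat \<Rightarrow> nat) \<Rightarrow> nat \<Rightarrow> nat \<Rightarrow> real" where
  "SSt n d \<pi> i j = (\<Sum>k<n. Smat d \<pi> i k * Smat d \<pi> j k)"

definition tr1 :: "nat \<Rightarrow> nat \<Rightarrow> (nat \<Rightarrow> nat \<Rightarrow> nat) \<Rightarrow> real" where
  "tr1 n d \<pi> = (\<Sum>i<n. SSt n d \<pi> i i)"

definition tr2 :: "nat \<Rightarrow> nat \<Rightarrow> (nat \<Rightarrow> nat \<Rightarrow> nat) \<Rightarrow> real" where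
  "tr2 n d \<pi> = (\<Sum>i<n. \<Sum>j<n. SSt n d \<pi> i j * SSt n d \<pi> j i)"

end

theory Submission
  imports Defs
begin

abbreviation U :: "nat \<Rightarrow> (nat \<Rightarrow> nat) pmf" where
  "U n \<equiv> pmf_of_set {\<pi>. \<pi> permutes {..<n}}"

lemma Pn_fin: "finite {\<pi>. \<pi> permutes {..<n::nat}}"
  by (simp add: finite_permutations)
lemma Pn_ne: "{\<pi>. \<pi> permutes {..<n::nat}} \<noteq> {}"
  using permutes_id by blast
lemma card_Pn: "card {\<pi>. \<pi> permutes {..<n::nat}} = fact n"
  by (simp add: card_permutations)
lemma set_U: "set_pmf (U n) = {\<pi>. \<pi> permutes {..<n}}"
  using Pn_fin Pn_ne by simp
lemma EU: fixes f :: "(nat \<Rightarrow> nat) \<Rightarrow> real" shows "measure_pmf.expectation (U n) f = (\<Sum>\<sigma>\<in>{\<pi>. \<pi> permutes {..<n}}. f \<sigma>) / fact n"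
  using integral_pmf_of_set[of "{\<pi>. \<pi> permutes {..<n}}" f] Pn_ne Pn_fin by (simp add: card_Pn)

lemma permutes_fix_sub:
  assumes "\<rho> permutes S" "\<forall>i\<in>K. \<rho> i = i"
  shows "\<rho> permutes (S - K)"
  using assms unfolding permutes_def by auto

lemma agree_card:
  assumes t: "\<tau> permutes S" and fS: "finite S" and KS: "K \<subseteq> S"
  shows "card {\<sigma>. \<sigma> permutes S \<and> (\<forall>i\<in>K. \<sigma> i = \<tau> i)} = fact (card S - card K)"
proof -
  have eq: "{\<sigma>. \<sigma> permutes S \<and> (\<forall>i\<in>K. \<sigma> i = \<tau> i)} = (\<lambda>\<rho>. \<tau> \<circ> \<rho>) ` {\<rho>. \<rho> permutes (S - K)}"
  proof (intro equalityI subsetI)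
    fix \<sigma> assume "\<sigma> \<in> {\<sigma>. \<sigma> permutes S \<and> (\<forall>i\<in>K. \<sigma> i = \<tau> i)}"
    then have s: "\<sigma> permutes S" and a: "\<forall>i\<in>K. \<sigma> i = \<tau> i" by auto
    let ?r = "inv \<tau> \<circ> \<sigma>"
    have "?r permutes S" by (intro permutes_compose s permutes_inv t)
    moreover have "\<forall>i\<in>K. ?r i = i" using a permutes_inverses(2)[OF t] by simp
    ultimately have "?r permutes (S - K)" by (rule permutes_fix_sub)
    moreover have "\<tau> \<circ> ?r = \<sigma>" using permutes_inverses(1)[OF t] by (auto simp: fun_eq_iff)
    ultimately show "\<sigma> \<in> (\<lambda>\<rho>. \<tau> \<circ> \<rho>) ` {\<rho>. \<rho> permutes (S - K)}" by (intro image_eqI[where x="?r"]) auto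
  next
    fix \<sigma> assume "\<sigma> \<in> (\<lambda>\<rho>. \<tau> \<circ> \<rho>) ` {\<rho>. \<rho> permutes (S - K)}"
    then obtain \<rho> where r: "\<rho> permutes (S - K)" and s: "\<sigma> = \<tau> \<circ> \<rho>" by auto
    have "\<rho> permutes S" using r permutes_subset by blast
    then have "\<sigma> permutes S" using s t permutes_compose by blast
    moreover have "\<forall>i\<in>K. \<sigma> i = \<tau> i" using s permutes_not_in[OF r] by auto
    ultimately show "\<sigma> \<in> {\<sigma>. \<sigma> permutes S \<and> (\<forall>i\<in>K. \<sigma> i = \<tau> i)}" by auto
  qed
  have inj: "inj_on (\<lambda>\<rho>. \<tau> \<circ> \<rho>) {\<rho>. \<rho> permutes (S - K)}"
  proof (rule inj_onI)
    fix x y assume "\<tau> \<circ> x = \<tau> \<circ> y"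
    then have "inv \<tau> \<circ> (\<tau> \<circ> x) = inv \<tau> \<circ> (\<tau> \<circ> y)" by simp
    then show "x = y" using permutes_inverses(2)[OF t] by (simp add: fun_eq_iff o_def)
  qed
  have "card {\<rho>. \<rho> permutes (S - K)} = fact (card (S - K))"
    using fS by (simp add: card_permutations)
  moreover have "card (S - K) = card S - card K" using KS fS by (simp add: card_Diff_subset finite_subset)
  ultimately show ?thesis unfolding eq using card_image[OF inj] by simp
qed

lemma sum_ind: "finite A \<Longrightarrow> (\<Sum>x\<in>A. if P x then 1 else 0 :: real) = real (card {x\<in>A. P x})"
  by (simp add: sum.If_cases Int_def)

lemma U1:
  assumes "i < n" "v < n"
  shows "measure_pmf.expectation (U n) (\<lambda>\<sigma>. if \<sigma> i = v then 1 else 0) = 1 / real n"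
proof -
  have t: "Transposition.transpose i v permutes {..<n}" using assms by (intro permutes_swap_id) auto
  have "{\<sigma>. \<sigma> permutes {..<n} \<and> \<sigma> i = v} = {\<sigma>. \<sigma> permutes {..<n} \<and> (\<forall>k\<in>{i}. \<sigma> k = Transposition.transpose i v k)}"
    by auto
  then have c: "card {\<sigma>. \<sigma> permutes {..<n} \<and> \<sigma> i = v} = fact (n - 1)"
    using agree_card[OF t, of "{i}"] assms by simp
  obtain m where m: "n = Suc m" using assms by (cases n) auto
  show ?thesis unfolding EU using c by (simp add: sum_ind Pn_fin m)
qed

lemma U2:
  assumes "i < n" "j < n" "u < n" "v < n" "i \<noteq> j" "u \<noteq> v"
  shows "measure_pmf.expectation (U n) (\<lambda>\<sigma>. if \<sigma> j = u \<and> \<sigma> i = v then 1 else 0) = 1 / (real n * (real n - 1))"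
proof -
  define j' where "j' = Transposition.transpose i v j"
  have j'n: "j' < n" using assms unfolding j'_def by (auto simp: Transposition.transpose_def)
  have vj': "v \<noteq> j'" using assms unfolding j'_def by (auto simp: Transposition.transpose_def)
  define t where "t = Transposition.transpose j' u \<circ> Transposition.transpose i v"
  have tp: "t permutes {..<n}" unfolding t_def using assms j'n
    by (intro permutes_compose permutes_swap_id) auto
  have ti: "t i = v" using vj' assms unfolding t_def by (auto simp: Transposition.transpose_def)
  have tj: "t j = u" unfolding t_def o_def j'_def[symmetric] by simp
  have "{\<sigma>. \<sigma> permutes {..<n} \<and> \<sigma> j = u \<and> \<sigma> i = v} = {\<sigma>. \<sigma> permutes {..<n} \<and> (\<forall>k\<in>{i,j}. \<sigma> k = t k)}"
    using ti tj by auto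
  then have c: "card {\<sigma>. \<sigma> permutes {..<n} \<and> \<sigma> j = u \<and> \<sigma> i = v} = fact (n - 2)"
    using agree_card[OF tp, of "{i,j}"] assms by (simp add: numeral_2_eq_2)
  obtain m where m: "n = Suc (Suc m)" using assms by (cases n; cases "n - 1") auto
  show ?thesis unfolding EU using c by (simp add: sum_ind Pn_fin m)
qed

lemma sum_Pow_card:
  fixes g :: "nat \<Rightarrow> real"
  assumes "finite A"
  shows "(\<Sum>K\<in>Pow A. g (card K)) = (\<Sum>k\<le>card A. real (card A choose k) * g k)"
proof -
  have "(\<Sum>K\<in>Pow A. g (card K)) = (\<Sum>k\<le>card A. \<Sum>K\<in>{K\<in>Pow A. card K = k}. g (card K))"
    using assms by (intro sum.group[symmetric]) (auto intro: card_mono)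
  also have "\<dots> = (\<Sum>k\<le>card A. real (card A choose k) * g k)"
  proof (intro sum.cong refl)
    fix k
    have "(\<Sum>K\<in>{K\<in>Pow A. card K = k}. g (card K)) = (\<Sum>K\<in>{K\<in>Pow A. card K = k}. g k)"
      by (intro sum.cong) auto
    also have "\<dots> = real (card {K\<in>Pow A. card K = k}) * g k" by simp
    also have "{K\<in>Pow A. card K = k} = {B. B \<subseteq> A \<and> card B = k}" by auto
    finally show "(\<Sum>K\<in>{K\<in>Pow A. card K = k}. g (card K)) = real (card A choose k) * g k"
      using n_subsets[OF assms, of k] by simp
  qed
  finally show ?thesis .
qed

lemma pow_sum_Pow:
  fixes y :: real
  assumes "finite A"
  shows "(1 + y) ^ card A = (\<Sum>K\<in>Pow A. y ^ card K)"
  using binomial_ring[of y 1 "card A"] sum_Pow_card[OF assms, of "\<lambda>k. y ^ k"]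
  by (simp add: add.commute)

lemma exp_partial:
  fixes y :: real
  assumes "y \<ge> 0"
  shows "(\<Sum>k\<le>n. y ^ k / fact k) \<le> exp y"
proof -
  have "(\<Sum>k\<le>n. y ^ k / fact k) \<le> (\<Sum>k. y ^ k / fact k)"
    using exp_converges[of y] assms
    by (intro sum_le_suminf) (auto simp: sums_iff divide_inverse mult.commute)
  also have "\<dots> = exp y" using exp_converges[of y] by (simp add: sums_iff divide_inverse mult.commute)
  finally show ?thesis .
qed

lemma U3:
  fixes y :: real
  assumes t: "\<tau> permutes {..<n}" and y: "y \<ge> 0"
  shows "measure_pmf.expectation (U n) (\<lambda>\<sigma>. (1 + y) ^ card {i\<in>{..<n}. \<sigma> i = \<tau> i}) \<le> exp y"
proof -
  let ?P = "{\<pi>. \<pi> permutes {..<n}}"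
  have "(\<Sum>\<sigma>\<in>?P. (1 + y) ^ card {i\<in>{..<n}. \<sigma> i = \<tau> i})
      = (\<Sum>\<sigma>\<in>?P. \<Sum>K\<in>Pow {..<n}. if (\<forall>i\<in>K. \<sigma> i = \<tau> i) then y ^ card K else 0)"
  proof (intro sum.cong refl)
    fix \<sigma>
    have "(1 + y) ^ card {i\<in>{..<n}. \<sigma> i = \<tau> i} = (\<Sum>K\<in>Pow {i\<in>{..<n}. \<sigma> i = \<tau> i}. y ^ card K)"
      by (intro pow_sum_Pow) auto
    also have "Pow {i\<in>{..<n}. \<sigma> i = \<tau> i} = {K\<in>Pow {..<n}. \<forall>i\<in>K. \<sigma> i = \<tau> i}" by auto
    also have "(\<Sum>K\<in>{K\<in>Pow {..<n}. \<forall>i\<in>K. \<sigma> i = \<tau> i}. y ^ card K)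
       = (\<Sum>K\<in>Pow {..<n}. if (\<forall>i\<in>K. \<sigma> i = \<tau> i) then y ^ card K else 0)"
      by (intro sum.inter_filter) auto
    finally show "(1 + y) ^ card {i\<in>{..<n}. \<sigma> i = \<tau> i} = (\<Sum>K\<in>Pow {..<n}. if (\<forall>i\<in>K. \<sigma> i = \<tau> i) then y ^ card K else 0)" .
  qed
  also have "\<dots> = (\<Sum>K\<in>Pow {..<n}. \<Sum>\<sigma>\<in>?P. if (\<forall>i\<in>K. \<sigma> i = \<tau> i) then y ^ card K else 0)"
    by (rule sum.swap)
  also have "\<dots> = (\<Sum>K\<in>Pow {..<n}. y ^ card K * fact (n - card K))"
  proof (intro sum.cong refl)
    fix K assume K: "K \<in> Pow {..<n}"
    have "(\<Sum>\<sigma>\<in>?P. if (\<forall>i\<in>K. \<sigma> i = \<tau> i) then y ^ card K else 0)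
        = y ^ card K * real (card {\<sigma>\<in>?P. \<forall>i\<in>K. \<sigma> i = \<tau> i})"
      using Pn_fin by (simp add: sum.If_cases Int_def)
    also have "{\<sigma>\<in>?P. \<forall>i\<in>K. \<sigma> i = \<tau> i} = {\<sigma>. \<sigma> permutes {..<n} \<and> (\<forall>i\<in>K. \<sigma> i = \<tau> i)}" by auto
    finally show "(\<Sum>\<sigma>\<in>?P. if (\<forall>i\<in>K. \<sigma> i = \<tau> i) then y ^ card K else 0) = y ^ card K * fact (n - card K)"
      using agree_card[OF t, of K] K by simp
  qed
  also have "\<dots> = (\<Sum>k\<le>n. real (n choose k) * (y ^ k * fact (n - k)))"
    using sum_Pow_card[of "{..<n}" "\<lambda>k. y ^ k * fact (n - k)"] by simp
  also have "\<dots> = fact n * (\<Sum>k\<le>n. y ^ k / fact k)"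
    unfolding sum_distrib_left
  proof (intro sum.cong refl)
    fix k assume "k \<in> {..n}"
    then have "k \<le> n" by simp
    then show "real (n choose k) * (y ^ k * fact (n - k)) = fact n * (y ^ k / fact k)"
      by (simp add: binomial_fact field_simps)
  qed
  finally have "(\<Sum>\<sigma>\<in>?P. (1 + y) ^ card {i\<in>{..<n}. \<sigma> i = \<tau> i}) / fact n = (\<Sum>k\<le>n. y ^ k / fact k)"
    by simp
  then show ?thesis unfolding EU using exp_partial[OF y, of n] by simp
qed

lemma set_PP:
  assumes "finite A" "g \<in> set_pmf (Pi_pmf A id (\<lambda>_. U n))" "l \<in> A"
  shows "g l permutes {..<n}"
  using set_Pi_pmf_subset'[OF assms(1), of id "\<lambda>_. U n"] assms(2,3) set_U
  by (auto simp: PiE_dflt_def)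

lemma fin_PP:
  assumes "finite A"
  shows "finite (set_pmf (Pi_pmf A id (\<lambda>_. U n)))"
proof -
  have "set_pmf (Pi_pmf A id (\<lambda>_. U n)) \<subseteq> PiE_dflt A id (set_pmf \<circ> (\<lambda>_. U n))"
    by (rule set_Pi_pmf_subset'[OF assms])
  also have "\<dots> = (\<lambda>h x. if x \<in> A then h x else id) ` PiE A (set_pmf \<circ> (\<lambda>_. U n))"
    by (rule dflt_image_PiE[symmetric])
  finally show ?thesis
    by (rule finite_subset) (intro finite_imageI finite_PiE assms, simp add: set_U Pn_fin)
qed

lemma fin_U: "finite (set_pmf (U n))"
  by (simp add: set_U Pn_fin)

lemma E_pair:
  fixes f :: "'a \<times> 'b \<Rightarrow> real"
  assumes fA: "finite (set_pmf A)" and fB: "finite (set_pmf B)"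
  shows "measure_pmf.expectation (pair_pmf A B) f =
    measure_pmf.expectation B (\<lambda>b. measure_pmf.expectation A (\<lambda>a. f (a, b)))"
proof -
  have "measure_pmf.expectation (pair_pmf A B) f = (\<Sum>x\<in>set_pmf A \<times> set_pmf B. pmf (pair_pmf A B) x *\<^sub>R f x)"
    using fA fB by (intro integral_measure_pmf) (auto simp: set_pair_pmf)
  also have "\<dots> = (\<Sum>a\<in>set_pmf A. \<Sum>b\<in>set_pmf B. pmf A a * pmf B b * f (a, b))"
    unfolding sum.cartesian_product by (intro sum.cong refl) (auto simp: pmf_pair)
  also have "\<dots> = (\<Sum>b\<in>set_pmf B. pmf B b * (\<Sum>a\<in>set_pmf A. pmf A a * f (a, b)))"
    by (subst sum.swap) (simp add: sum_distrib_left mult_ac)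
  also have "\<dots> = measure_pmf.expectation B (\<lambda>b. measure_pmf.expectation A (\<lambda>a. f (a, b)))"
  proof -
    have "\<And>b. measure_pmf.expectation A (\<lambda>a. f (a, b)) = (\<Sum>a\<in>set_pmf A. pmf A a * f (a, b))"
      using fA by (subst integral_measure_pmf[OF fA]) auto
    moreover have "measure_pmf.expectation B (\<lambda>b. measure_pmf.expectation A (\<lambda>a. f (a, b)))
       = (\<Sum>b\<in>set_pmf B. pmf B b * measure_pmf.expectation A (\<lambda>a. f (a, b)))"
      using fB by (subst integral_measure_pmf[OF fB]) auto
    ultimately show ?thesis by simp
  qed
  finally show ?thesis .
qed

lemma decomp:
  fixes f :: "(nat \<Rightarrow> nat \<Rightarrow> nat) \<Rightarrow> real"
  assumes "finite A" "a \<in> A"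
  shows "measure_pmf.expectation (Pi_pmf A id (\<lambda>_. U n)) f =
    measure_pmf.expectation (Pi_pmf (A - {a}) id (\<lambda>_. U n)) (\<lambda>g. measure_pmf.expectation (U n) (\<lambda>y. f (g(a := y))))"
proof -
  have A: "A = insert a (A - {a})" using assms by auto
  have "Pi_pmf A id (\<lambda>_. U n) = map_pmf (\<lambda>(y,f). f(a:=y)) (pair_pmf (U n) (Pi_pmf (A - {a}) id (\<lambda>_. U n)))"
    by (subst A, rule Pi_pmf_insert) (use assms in auto)
  then show ?thesis
    by (simp add: E_pair[OF fin_U fin_PP] assms case_prod_unfold)
qed

lemma E_const: "measure_pmf.expectation p (\<lambda>_. c::real) = c"
  by simp

definition Fx :: "nat \<Rightarrow> (nat \<Rightarrow> nat) \<Rightarrow> (nat \<Rightarrow> nat) \<Rightarrow> real" where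
  "Fx n \<sigma> \<tau> = real (card {i\<in>{..<n}. \<sigma> i = \<tau> i})"

definition Tsum :: "nat \<Rightarrow> nat \<Rightarrow> (nat \<Rightarrow> nat \<Rightarrow> nat) \<Rightarrow> real" where
  "Tsum n d \<pi> = (\<Sum>l<d. \<Sum>l'<d. if l = l' then 0 else Fx n (\<pi> l) (\<pi> l'))"

lemma Fx_sym: "Fx n \<sigma> \<tau> = Fx n \<tau> \<sigma>"
  unfolding Fx_def by (simp add: eq_commute)

lemma Tsum_Suc: "Tsum n (Suc d) (g(d := y)) = Tsum n d g + 2 * (\<Sum>l<d. Fx n (g l) y)"
proof -
  have "Tsum n (Suc d) (g(d := y)) = (\<Sum>l<d. (\<Sum>l'<d. if l = l' then 0 else Fx n (g l) (g l')) + Fx n (g l) y)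
      + (\<Sum>l'<d. Fx n y (g l'))"
    unfolding Tsum_def by (auto simp: sum.distrib intro!: sum.cong)
  also have "\<dots> = Tsum n d g + 2 * (\<Sum>l<d. Fx n (g l) y)"
    unfolding Tsum_def by (simp add: sum.distrib Fx_sym[of n y])
  finally show ?thesis .
qed

lemma J:
  fixes d :: nat and \<theta> :: real
  assumes g: "\<forall>l<d. g l permutes {..<n}" and th: "\<theta> \<ge> 0"
  shows "measure_pmf.expectation (U n) (\<lambda>y. exp (2 * \<theta> * (\<Sum>l<d. Fx n (g l) y))) \<le> exp (exp (2 * \<theta> * real d) - 1)"
proof (cases "d = 0")
  case True
  then have "(\<lambda>y. exp (2 * \<theta> * (\<Sum>l<d. Fx n (g l) y))) = (\<lambda>_. 1)" by simp
  then show ?thesis using True by (simp only: E_const) simp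
next
  case False
  let ?u = "2 * \<theta> * real d"
  have pw: "exp (2 * \<theta> * (\<Sum>l<d. Fx n (g l) y)) \<le> (\<Sum>l<d. (1 / real d) * exp (?u * Fx n (g l) y))" for y
  proof -
    have "exp (\<Sum>l<d. (1 / real d) *\<^sub>R (?u * Fx n (g l) y)) \<le> (\<Sum>l<d. (1 / real d) * exp (?u * Fx n (g l) y))"
      using False by (intro convex_on_sum[OF _ _ exp_convex]) auto
    moreover have "(\<Sum>l<d. (1 / real d) *\<^sub>R (?u * Fx n (g l) y)) = 2 * \<theta> * (\<Sum>l<d. Fx n (g l) y)"
      using False by (simp add: sum_distrib_left mult.assoc)
    ultimately show ?thesis by simp
  qed
  have each: "measure_pmf.expectation (U n) (\<lambda>y. exp (?u * Fx n (g l) y)) \<le> exp (exp ?u - 1)" if "l < d" for l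
  proof -
    have "(\<lambda>y. exp (?u * Fx n (g l) y)) = (\<lambda>y. (1 + (exp ?u - 1)) ^ card {i\<in>{..<n}. y i = g l i})"
    proof
      fix y
      have "{i\<in>{..<n}. g l i = y i} = {i\<in>{..<n}. y i = g l i}" by auto
      then show "exp (?u * Fx n (g l) y) = (1 + (exp ?u - 1)) ^ card {i\<in>{..<n}. y i = g l i}"
        unfolding Fx_def by (simp add: exp_of_nat_mult[symmetric] mult.commute)
    qed
    then show ?thesis using U3[of "g l" n "exp ?u - 1"] g that th by simp
  qed
  have "measure_pmf.expectation (U n) (\<lambda>y. exp (2 * \<theta> * (\<Sum>l<d. Fx n (g l) y)))
      \<le> measure_pmf.expectation (U n) (\<lambda>y. \<Sum>l<d. (1 / real d) * exp (?u * Fx n (g l) y))"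
    by (intro integral_mono integrable_measure_pmf_finite fin_U pw)
  also have "\<dots> = (\<Sum>l<d. (1 / real d) * measure_pmf.expectation (U n) (\<lambda>y. exp (?u * Fx n (g l) y)))"
    by (simp add: integrable_measure_pmf_finite fin_U)
  also have "\<dots> \<le> (\<Sum>l<d. (1 / real d) * exp (exp ?u - 1))"
    by (intro sum_mono mult_left_mono each) auto
  also have "\<dots> = exp (exp ?u - 1)" using False by simp
  finally show ?thesis by simp
qed

lemma rp_decomp:
  fixes f :: "(nat \<Rightarrow> nat \<Rightarrow> nat) \<Rightarrow> real"
  shows "measure_pmf.expectation (rand_perms n (Suc d)) f =
    measure_pmf.expectation (rand_perms n d) (\<lambda>g. measure_pmf.expectation (U n) (\<lambda>y. f (g(d := y))))"
proof -
  have "{..<Suc d} - {d} = {..<d}" by auto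
  then show ?thesis unfolding rand_perms_def using decomp[of "{..<Suc d}" d n f] by simp
qed

lemma set_rp: "g \<in> set_pmf (rand_perms n d) \<Longrightarrow> l < d \<Longrightarrow> g l permutes {..<n}"
  unfolding rand_perms_def by (rule set_PP[of "{..<d}"]) auto

lemma fin_rp: "finite (set_pmf (rand_perms n d))"
  unfolding rand_perms_def by (rule fin_PP) auto

lemma mgf:
  fixes \<theta> :: real
  assumes th: "\<theta> \<ge> 0"
  shows "measure_pmf.expectation (rand_perms n d) (\<lambda>\<pi>. exp (\<theta> * Tsum n d \<pi>)) \<le> exp (\<Sum>m<d. exp (2 * \<theta> * real m) - 1)"
proof (induction d)
  case 0
  have "(\<lambda>\<pi>. exp (\<theta> * Tsum n 0 \<pi>)) = (\<lambda>_. 1)" by (simp add: Tsum_def)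
  then show ?case by (simp only: E_const) simp
next
  case (Suc d)
  let ?B = "exp (exp (2 * \<theta> * real d) - 1)"
  have inner: "measure_pmf.expectation (U n) (\<lambda>y. exp (\<theta> * Tsum n (Suc d) (g(d := y))))
      \<le> exp (\<theta> * Tsum n d g) * ?B" if g: "g \<in> set_pmf (rand_perms n d)" for g
  proof -
    have "(\<lambda>y. exp (\<theta> * Tsum n (Suc d) (g(d := y)))) = (\<lambda>y. exp (\<theta> * Tsum n d g) * exp (2 * \<theta> * (\<Sum>l<d. Fx n (g l) y)))"
      by (simp add: Tsum_Suc exp_add[symmetric] algebra_simps)
    then have "measure_pmf.expectation (U n) (\<lambda>y. exp (\<theta> * Tsum n (Suc d) (g(d := y))))
       = exp (\<theta> * Tsum n d g) * measure_pmf.expectation (U n) (\<lambda>y. exp (2 * \<theta> * (\<Sum>l<d. Fx n (g l) y)))"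
      by simp
    also have "\<dots> \<le> exp (\<theta> * Tsum n d g) * ?B"
      using set_rp[OF g] th by (intro mult_left_mono J) auto
    finally show ?thesis .
  qed
  have "measure_pmf.expectation (rand_perms n (Suc d)) (\<lambda>\<pi>. exp (\<theta> * Tsum n (Suc d) \<pi>))
     = measure_pmf.expectation (rand_perms n d) (\<lambda>g. measure_pmf.expectation (U n) (\<lambda>y. exp (\<theta> * Tsum n (Suc d) (g(d := y)))))"
    by (rule rp_decomp)
  also have "\<dots> \<le> measure_pmf.expectation (rand_perms n d) (\<lambda>g. exp (\<theta> * Tsum n d g) * ?B)"
    by (intro integral_mono_AE integrable_measure_pmf_finite fin_rp)
       (auto simp: AE_measure_pmf_iff intro: inner)
  also have "\<dots> = measure_pmf.expectation (rand_perms n d) (\<lambda>g. exp (\<theta> * Tsum n d g)) * ?B"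
    by simp
  also have "\<dots> \<le> exp (\<Sum>m<d. exp (2 * \<theta> * real m) - 1) * ?B"
    by (intro mult_right_mono Suc) auto
  also have "\<dots> = exp (\<Sum>m<Suc d. exp (2 * \<theta> * real m) - 1)"
    by (simp add: exp_add)
  finally show ?case .
qed

lemma Smat_sq:
  assumes "\<forall>l<d. \<pi> l i < n"
  shows "(\<Sum>k<n. Smat d \<pi> i k * Smat d \<pi> i k) = (\<Sum>l<d. \<Sum>l'<d. if \<pi> l i = \<pi> l' i then 1 else 0)"
proof -
  have "(\<Sum>k<n. Smat d \<pi> i k * Smat d \<pi> i k)
     = (\<Sum>k<n. \<Sum>l<d. \<Sum>l'<d. (if \<pi> l i = k then 1 else 0) * (if \<pi> l' i = k then 1 else 0 :: real))"
    unfolding Smat_def by (simp add: sum_product)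
  also have "\<dots> = (\<Sum>l<d. \<Sum>l'<d. \<Sum>k<n. (if \<pi> l i = k then 1 else 0) * (if \<pi> l' i = k then 1 else 0 :: real))"
    by (subst sum.swap) (simp add: sum.swap[of _ "{..<n}"])
  also have "\<dots> = (\<Sum>l<d. \<Sum>l'<d. if \<pi> l i = \<pi> l' i then 1 else 0)"
  proof (intro sum.cong refl)
    fix l l' assume l: "l \<in> {..<d}"
    have "(\<Sum>k<n. (if \<pi> l i = k then 1 else 0) * (if \<pi> l' i = k then 1 else 0 :: real))
        = (\<Sum>k<n. if k = \<pi> l i then (if \<pi> l' i = \<pi> l i then 1 else 0) else 0)"
      by (intro sum.cong) auto
    also have "\<dots> = (if \<pi> l i = \<pi> l' i then 1 else 0)"
      using assms l by (simp add: sum.delta')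
    finally show "(\<Sum>k<n. (if \<pi> l i = k then 1 else 0) * (if \<pi> l' i = k then 1 else 0 :: real)) = (if \<pi> l i = \<pi> l' i then 1 else 0)" .
  qed
  finally show ?thesis .
qed

lemma Fx_self: "Fx n \<sigma> \<sigma> = real n"
  unfolding Fx_def by simp

lemma tr1_eq:
  assumes "\<forall>l<d. \<forall>i<n. \<pi> l i < n"
  shows "tr1 n d \<pi> = real n * real d + Tsum n d \<pi>"
proof -
  have "tr1 n d \<pi> = (\<Sum>i<n. \<Sum>l<d. \<Sum>l'<d. if \<pi> l i = \<pi> l' i then 1 else 0)"
    unfolding tr1_def SSt_def using assms by (intro sum.cong refl Smat_sq) auto
  also have "\<dots> = (\<Sum>l<d. \<Sum>l'<d. \<Sum>i<n. if \<pi> l i = \<pi> l' i then 1 else 0)"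
    by (subst sum.swap) (simp add: sum.swap[of _ "{..<n}"])
  also have "\<dots> = (\<Sum>l<d. \<Sum>l'<d. Fx n (\<pi> l) (\<pi> l'))"
    unfolding Fx_def by (simp add: sum_ind)
  also have "\<dots> = (\<Sum>l<d. \<Sum>l'<d. (if l = l' then real n else 0) + (if l = l' then 0 else Fx n (\<pi> l) (\<pi> l')))"
    by (intro sum.cong refl) (auto simp: Fx_self)
  also have "\<dots> = real n * real d + Tsum n d \<pi>"
    unfolding Tsum_def by (simp add: sum.distrib)
  finally show ?thesis .
qed

lemma geo_bound:
  assumes d: "d \<ge> (1::nat)"
  shows "(\<Sum>m<d. exp (2 * (1 / real d) * real m) - 1) \<le> exp 1 * real d"
proof -
  define q where "q = exp (2 / real d)"
  have q1: "q - 1 \<ge> 2 / real d" unfolding q_def using exp_ge_add_one_self[of "2 / real d"] by linarith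
  have dpos: "real d > 0" using d by simp
  have qgt: "q > 1" unfolding q_def using dpos by simp
  have qm: "exp (2 * (1 / real d) * real m) = q ^ m" for m
    unfolding q_def by (simp add: exp_of_nat_mult[symmetric] field_simps)
  have qd: "q ^ d = exp 2" unfolding q_def using dpos by (simp add: exp_of_nat_mult[symmetric])
  have "(\<Sum>m<d. q ^ m) = (q ^ d - 1) / (q - 1)"
    using qgt by (simp add: sum_gp_strict field_simps)
  also have "\<dots> \<le> (exp 2 - 1) / (2 / real d)"
    using qd q1 qgt dpos by (intro frac_le) (auto simp: qd)
  also have "\<dots> = (exp 2 - 1) * real d / 2" by simp
  finally have S: "(\<Sum>m<d. q ^ m) \<le> (exp 2 - 1) * real d / 2" .
  have e2: "exp (2::real) = exp 1 * exp 1" by (simp add: exp_add[symmetric])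
  have "(exp 1 - 3) * (exp 1 + 1) \<le> (0::real)"
    using exp_le by (intro mult_nonpos_nonneg) (auto intro: add_nonneg_nonneg)
  then have key: "(exp 2 - 1) / 2 - 1 \<le> (exp 1::real)" unfolding e2 by (simp add: algebra_simps)
  have "(\<Sum>m<d. exp (2 * (1 / real d) * real m) - 1) = (\<Sum>m<d. q ^ m) - real d"
    unfolding qm by (simp add: sum_subtractf)
  also have "\<dots> \<le> ((exp 2 - 1) / 2 - 1) * real d" using S by (simp add: algebra_simps)
  also have "\<dots> \<le> exp 1 * real d" using key dpos by (intro mult_right_mono) auto
  finally show ?thesis .
qed

lemma part1:
  assumes d: "real d \<ge> 1" and x: "x \<ge> exp 1"
  shows "measure_pmf.prob (rand_perms n d) {\<pi>. tr1 n d \<pi> \<ge> real n * real d + x * (real d)^2}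
        \<le> real d * exp (- real d * (x - exp 1))"
proof -
  define \<theta> where "\<theta> = 1 / real d"
  have dpos: "real d > 0" using d by simp
  have d1: "d \<ge> 1" using d by simp
  define u where "u = (\<lambda>\<pi>. exp (\<theta> * (tr1 n d \<pi> - real n * real d)))"
  have sub: "{\<pi>. tr1 n d \<pi> \<ge> real n * real d + x * (real d)^2} \<subseteq> {\<pi> \<in> space (measure_pmf (rand_perms n d)). u \<pi> \<ge> exp (x * real d)}"
  proof
    fix \<pi> assume "\<pi> \<in> {\<pi>. tr1 n d \<pi> \<ge> real n * real d + x * (real d)^2}"
    then have "tr1 n d \<pi> - real n * real d \<ge> x * (real d)^2" by simp
    then have "\<theta> * (tr1 n d \<pi> - real n * real d) \<ge> \<theta> * (x * (real d)^2)"
      unfolding \<theta>_def using dpos by (intro mult_left_mono) auto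
    moreover have "\<theta> * (x * (real d)^2) = x * real d" unfolding \<theta>_def using dpos by (simp add: power2_eq_square)
    ultimately show "\<pi> \<in> {\<pi> \<in> space (measure_pmf (rand_perms n d)). u \<pi> \<ge> exp (x * real d)}"
      unfolding u_def by simp
  qed
  have Eu: "measure_pmf.expectation (rand_perms n d) u = measure_pmf.expectation (rand_perms n d) (\<lambda>\<pi>. exp (\<theta> * Tsum n d \<pi>))"
  proof (intro integral_cong_AE)
    show "AE \<pi> in measure_pmf (rand_perms n d). u \<pi> = exp (\<theta> * Tsum n d \<pi>)"
      unfolding AE_measure_pmf_iff
    proof
      fix \<pi> assume p: "\<pi> \<in> set_pmf (rand_perms n d)"
      have "\<forall>l<d. \<forall>i<n. \<pi> l i < n"
      proof (intro allI impI)
        fix l i assume "l < d" "i < n"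
        then show "\<pi> l i < n" using permutes_in_image[OF set_rp[OF p \<open>l < d\<close>]] by simp
      qed
      then show "u \<pi> = exp (\<theta> * Tsum n d \<pi>)" unfolding u_def by (simp add: tr1_eq)
    qed
  qed auto
  have "measure_pmf.prob (rand_perms n d) {\<pi>. tr1 n d \<pi> \<ge> real n * real d + x * (real d)^2}
      \<le> measure_pmf.prob (rand_perms n d) {\<pi> \<in> space (measure_pmf (rand_perms n d)). u \<pi> \<ge> exp (x * real d)}"
    by (rule measure_pmf.finite_measure_mono[OF sub]) simp
  also have "\<dots> \<le> measure_pmf.expectation (rand_perms n d) u / exp (x * real d)"
    by (intro integral_Markov_inequality_measure integrable_measure_pmf_finite fin_rp)
       (auto simp: u_def)
  also have "\<dots> \<le> exp (exp 1 * real d) / exp (x * real d)"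
  proof (intro divide_right_mono)
    have "measure_pmf.expectation (rand_perms n d) u \<le> exp (\<Sum>m<d. exp (2 * \<theta> * real m) - 1)"
      unfolding Eu by (rule mgf) (simp add: \<theta>_def)
    also have "\<dots> \<le> exp (exp 1 * real d)"
      unfolding \<theta>_def using geo_bound[OF d1] by simp
    finally show "measure_pmf.expectation (rand_perms n d) u \<le> exp (exp 1 * real d)" .
  qed simp
  also have "\<dots> = exp (- real d * (x - exp 1))"
    by (simp add: exp_diff[symmetric] algebra_simps)
  also have "\<dots> \<le> real d * exp (- real d * (x - exp 1))"
    using mult_right_mono[OF d, of "exp (- real d * (x - exp 1))"] by simp
  finally show ?thesis .
qed

definition Nw :: "nat \<Rightarrow> (nat \<Rightarrow> nat \<Rightarrow> nat) \<Rightarrow> nat \<Rightarrow> nat \<Rightarrow> nat \<Rightarrow> nat \<Rightarrow> real" where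
  "Nw n \<pi> a b c e = (\<Sum>i<n. \<Sum>j<n. if \<pi> a i = \<pi> b j \<and> \<pi> c i = \<pi> e j then 1 else 0)"

lemma Nw_sym1: "Nw n \<pi> a b c e = Nw n \<pi> b a e c"
  unfolding Nw_def by (subst sum.swap) (simp add: eq_commute conj_commute)

lemma Nw_sym2: "Nw n \<pi> a b c e = Nw n \<pi> c e a b"
  unfolding Nw_def by (simp add: conj_commute)

lemma cnt1:
  fixes n :: nat
  assumes s: "\<sigma> permutes {..<n}" and v: "v < n"
  shows "(\<Sum>j<n. if \<sigma> j = v then 1 else 0 :: real) = 1"
proof -
  have "(\<Sum>j<n. if \<sigma> j = v then 1 else 0 :: real) = real (card {j\<in>{..<n}. \<sigma> j = v})"
    by (rule sum_ind) simp
  also have "{j\<in>{..<n}. \<sigma> j = v} = {inv \<sigma> v}"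
  proof (intro equalityI subsetI)
    fix j assume "j \<in> {j\<in>{..<n}. \<sigma> j = v}"
    then show "j \<in> {inv \<sigma> v}" using permutes_inverses(2)[OF s, of j] by auto
  next
    fix j assume "j \<in> {inv \<sigma> v}"
    moreover have "inv \<sigma> v < n" using permutes_in_image[OF permutes_inv[OF s]] v by simp
    ultimately show "j \<in> {j\<in>{..<n}. \<sigma> j = v}" using permutes_inverses(1)[OF s] by auto
  qed
  finally show ?thesis by simp
qed

lemma N_le_n:
  assumes p: "\<forall>l<d. \<pi> l permutes {..<n}" and ab: "a < d" "b < d"
  shows "Nw n \<pi> a b c e \<le> real n"
proof -
  have "Nw n \<pi> a b c e \<le> (\<Sum>i<n. \<Sum>j<n. if \<pi> b j = \<pi> a i then 1 else 0)"
    unfolding Nw_def by (intro sum_mono) auto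
  also have "\<dots> = (\<Sum>i<n. 1)"
  proof (intro sum.cong refl cnt1)
    fix i assume "i \<in> {..<n}"
    then show "\<pi> a i < n" using permutes_in_image[of "\<pi> a" "{..<n}" i] p ab by simp
  qed (use p ab in auto)
  finally show ?thesis by simp
qed

lemma S1:
  assumes d: "a < d" "b < d" "c < d" "e < d" and ne: "a \<noteq> b" "a \<noteq> c" "a \<noteq> e"
  shows "measure_pmf.expectation (rand_perms n d) (\<lambda>\<pi>. Nw n \<pi> a b c e) \<le> 1"
proof -
  let ?Q = "Pi_pmf ({..<d} - {a}) id (\<lambda>_. U n)"
  have inner: "measure_pmf.expectation (U n) (\<lambda>y. Nw n (g(a := y)) a b c e) \<le> 1"
    if g: "g \<in> set_pmf ?Q" for g
  proof -
    have gp: "g l permutes {..<n}" if "l < d" "l \<noteq> a" for l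
      using set_PP[OF _ g] that by auto
    have gv: "g l j < n" if "l < d" "l \<noteq> a" "j < n" for l j
      using permutes_in_image[OF gp[OF that(1,2)], of j] that(3) by simp
    have "measure_pmf.expectation (U n) (\<lambda>y. Nw n (g(a := y)) a b c e)
       = measure_pmf.expectation (U n) (\<lambda>y. \<Sum>i<n. \<Sum>j<n. (if g c i = g e j then 1 else 0) * (if y i = g b j then 1 else 0))"
      unfolding Nw_def using ne by (intro arg_cong[where f="measure_pmf.expectation (U n)"] ext sum.cong refl) auto
    also have "\<dots> = (\<Sum>i<n. \<Sum>j<n. (if g c i = g e j then 1 else 0) * measure_pmf.expectation (U n) (\<lambda>y. if y i = g b j then 1 else 0))"
      by (simp add: integrable_measure_pmf_finite fin_U)
    also have "\<dots> = (\<Sum>i<n. \<Sum>j<n. (if g e j = g c i then 1 else 0) * (1 / real n))"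
      using gv d ne by (intro sum.cong refl) (auto simp: U1)
    also have "\<dots> = (\<Sum>i<n. (\<Sum>j<n. if g e j = g c i then 1 else 0) * (1 / real n))"
      by (simp add: sum_distrib_right del: times_divide_eq_right)
    also have "\<dots> = (\<Sum>i<n. 1 / real n)"
    proof (intro sum.cong refl)
      fix i assume "i \<in> {..<n}"
      then show "(\<Sum>j<n. if g e j = g c i then 1 else 0) * (1 / real n) = 1 / real n"
        using cnt1[OF gp[of e], of "g c i"] gv[of c i] d ne by simp
    qed
    also have "\<dots> \<le> 1" by simp
    finally show ?thesis .
  qed
  have "measure_pmf.expectation (rand_perms n d) (\<lambda>\<pi>. Nw n \<pi> a b c e)
     = measure_pmf.expectation ?Q (\<lambda>g. measure_pmf.expectation (U n) (\<lambda>y. Nw n (g(a := y)) a b c e))"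
    unfolding rand_perms_def using d by (intro decomp) auto
  also have "\<dots> \<le> measure_pmf.expectation ?Q (\<lambda>_. 1)"
    by (intro integral_mono_AE integrable_measure_pmf_finite fin_PP)
       (auto simp: AE_measure_pmf_iff intro: inner)
  also have "\<dots> = 1" by (rule E_const)
  finally show ?thesis .
qed

lemma S2:
  assumes d: "a < d" "b < d" and ne: "a \<noteq> b"
  shows "measure_pmf.expectation (rand_perms n d) (\<lambda>\<pi>. Nw n \<pi> a b b a) \<le> 2"
proof -
  let ?Q = "Pi_pmf ({..<d} - {b}) id (\<lambda>_. U n)"
  have inner: "measure_pmf.expectation (U n) (\<lambda>y. Nw n (g(b := y)) a b b a) \<le> 2"
    if g: "g \<in> set_pmf ?Q" for g
  proof -
    have gp: "g a permutes {..<n}" using set_PP[OF _ g, of a] d ne by auto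
    have gv: "g a j < n" if "j < n" for j
      using permutes_in_image[OF gp, of j] that by simp
    have ginj: "g a i \<noteq> g a j" if "i \<noteq> j" for i j
      using permutes_inj[OF gp] that by (auto dest: injD)
    define h where "h i j = measure_pmf.expectation (U n) (\<lambda>y. if y j = g a i \<and> y i = g a j then 1 else 0 :: real)" for i j
    have "measure_pmf.expectation (U n) (\<lambda>y. Nw n (g(b := y)) a b b a)
       = measure_pmf.expectation (U n) (\<lambda>y. \<Sum>i<n. \<Sum>j<n. if y j = g a i \<and> y i = g a j then 1 else 0)"
      unfolding Nw_def using ne by (intro arg_cong[where f="measure_pmf.expectation (U n)"] ext sum.cong refl) auto
    also have "\<dots> = (\<Sum>i<n. \<Sum>j<n. h i j)"
      unfolding h_def by (simp add: integrable_measure_pmf_finite fin_U)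
    also have "\<dots> \<le> (\<Sum>i<n. 2 / real n)"
    proof (intro sum_mono)
      fix i assume i: "i \<in> {..<n}"
      have hii: "h i i = 1 / real n"
      proof -
        have "h i i = measure_pmf.expectation (U n) (\<lambda>y. if y i = g a i then 1 else 0)"
          unfolding h_def by (intro arg_cong[where f="measure_pmf.expectation (U n)"] ext) auto
        also have "\<dots> = 1 / real n" using i gv by (intro U1) auto
        finally show ?thesis .
      qed
      have hij: "h i j = 1 / (real n * (real n - 1))" if "j \<in> {..<n} - {i}" for j
        unfolding h_def using that i gv ginj by (intro U2) auto
      have "(\<Sum>j<n. h i j) = h i i + (\<Sum>j\<in>{..<n} - {i}. h i j)"
        using i by (simp add: sum.remove)
      also have "\<dots> = 1 / real n + real (n - 1) * (1 / (real n * (real n - 1)))"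
        using i by (simp add: hii hij)
      also have "\<dots> \<le> 2 / real n"
      proof (cases "n = 1")
        case True then show ?thesis by simp
      next
        case False
        then have "n \<ge> 2" using i by auto
        then have "real (n - 1) * (1 / (real n * (real n - 1))) = 1 / real n"
          by (simp add: of_nat_diff field_simps)
        then show ?thesis by simp
      qed
      finally show "(\<Sum>j<n. h i j) \<le> 2 / real n" .
    qed
    also have "\<dots> \<le> 2" by simp
    finally show ?thesis .
  qed
  have "measure_pmf.expectation (rand_perms n d) (\<lambda>\<pi>. Nw n \<pi> a b b a)
     = measure_pmf.expectation ?Q (\<lambda>g. measure_pmf.expectation (U n) (\<lambda>y. Nw n (g(b := y)) a b b a))"
    unfolding rand_perms_def using d by (intro decomp) auto
  also have "\<dots> \<le> measure_pmf.expectation ?Q (\<lambda>_. 2)"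
    by (intro integral_mono_AE integrable_measure_pmf_finite fin_PP)
       (auto simp: AE_measure_pmf_iff intro: inner)
  also have "\<dots> = 2" by (rule E_const)
  finally show ?thesis .
qed

lemma Smat_prod:
  assumes "\<forall>l<d. \<pi> l i < n"
  shows "(\<Sum>k<n. Smat d \<pi> i k * Smat d \<pi> j k) = (\<Sum>l<d. \<Sum>l'<d. if \<pi> l i = \<pi> l' j then 1 else 0)"
proof -
  have "(\<Sum>k<n. Smat d \<pi> i k * Smat d \<pi> j k)
     = (\<Sum>k<n. \<Sum>l<d. \<Sum>l'<d. (if \<pi> l i = k then 1 else 0) * (if \<pi> l' j = k then 1 else 0 :: real))"
    unfolding Smat_def by (simp add: sum_product)
  also have "\<dots> = (\<Sum>l<d. \<Sum>l'<d. \<Sum>k<n. (if \<pi> l i = k then 1 else 0) * (if \<pi> l' j = k then 1 else 0 :: real))"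
    by (subst sum.swap) (simp add: sum.swap[of _ "{..<n}"])
  also have "\<dots> = (\<Sum>l<d. \<Sum>l'<d. if \<pi> l i = \<pi> l' j then 1 else 0)"
  proof (intro sum.cong refl)
    fix l l' assume l: "l \<in> {..<d}"
    have "(\<Sum>k<n. (if \<pi> l i = k then 1 else 0) * (if \<pi> l' j = k then 1 else 0 :: real))
        = (\<Sum>k<n. if k = \<pi> l i then (if \<pi> l' j = \<pi> l i then 1 else 0) else 0)"
      by (intro sum.cong) auto
    also have "\<dots> = (if \<pi> l i = \<pi> l' j then 1 else 0)"
      using assms l by (simp add: sum.delta')
    finally show "(\<Sum>k<n. (if \<pi> l i = k then 1 else 0) * (if \<pi> l' j = k then 1 else 0 :: real)) = (if \<pi> l i = \<pi> l' j then 1 else 0)" .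
  qed
  finally show ?thesis .
qed

lemma tr2_eq:
  assumes p: "\<forall>l<d. \<forall>i<n. \<pi> l i < n"
  shows "tr2 n d \<pi> = (\<Sum>a<d. \<Sum>c<d. \<Sum>b<d. \<Sum>e<d. Nw n \<pi> a b e c)"
proof -
  have "tr2 n d \<pi> = (\<Sum>i<n. \<Sum>j<n. (\<Sum>a<d. \<Sum>b<d. if \<pi> a i = \<pi> b j then 1 else 0) * (\<Sum>c<d. \<Sum>e<d. if \<pi> c j = \<pi> e i then 1 else 0))"
    unfolding tr2_def SSt_def using p by (intro sum.cong refl arg_cong2[where f="(*)"] Smat_prod) auto
  also have "\<dots> = (\<Sum>i<n. \<Sum>j<n. \<Sum>a<d. \<Sum>c<d. \<Sum>b<d. \<Sum>e<d. if \<pi> a i = \<pi> b j \<and> \<pi> e i = \<pi> c j then 1 else 0)"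
    unfolding sum_product by (intro sum.cong refl) auto
  also have "\<dots> = (\<Sum>a<d. \<Sum>c<d. \<Sum>b<d. \<Sum>e<d. \<Sum>i<n. \<Sum>j<n. if \<pi> a i = \<pi> b j \<and> \<pi> e i = \<pi> c j then 1 else 0)"
    by (simp add: sum.swap[of _ "{..<n}" "{..<d}"])
  also have "\<dots> = (\<Sum>a<d. \<Sum>c<d. \<Sum>b<d. \<Sum>e<d. Nw n \<pi> a b e c)"
    unfolding Nw_def ..
  finally show ?thesis .
qed

lemma EN:
  assumes d: "a < d" "b < d" "c < d" "e < d"
  shows "measure_pmf.expectation (rand_perms n d) (\<lambda>\<pi>. Nw n \<pi> a b c e)
     \<le> (if a = b then if c = e then real n else 0 else 0) + (if a = c then if b = e then real n else 0 else 0) + 2"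
proof (cases "(a = b \<and> c = e) \<or> (a = c \<and> b = e)")
  case True
  have "measure_pmf.expectation (rand_perms n d) (\<lambda>\<pi>. Nw n \<pi> a b c e) \<le> measure_pmf.expectation (rand_perms n d) (\<lambda>_. real n)"
    by (intro integral_mono_AE integrable_measure_pmf_finite fin_rp)
       (auto simp: AE_measure_pmf_iff intro!: N_le_n[of d _ n a b c e] d dest: set_rp)
  also have "\<dots> = real n" by (rule E_const)
  finally show ?thesis using True by auto
next
  case False
  have "measure_pmf.expectation (rand_perms n d) (\<lambda>\<pi>. Nw n \<pi> a b c e) \<le> 2"
  proof -
    consider "a \<noteq> b \<and> a \<noteq> c \<and> a \<noteq> e" | "b \<noteq> a \<and> b \<noteq> e \<and> b \<noteq> c" | "c \<noteq> e \<and> c \<noteq> a \<and> c \<noteq> b"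
      | "e \<noteq> c \<and> e \<noteq> b \<and> e \<noteq> a" | "a = e \<and> b = c \<and> a \<noteq> b"
      using False by blast
    then show ?thesis
    proof cases
      case 1 then show ?thesis using S1[of a d b c e n] d by simp
    next
      case 2 then show ?thesis using S1[of b d a e c n] d by (simp add: Nw_sym1[of n _ a b c e])
    next
      case 3 then show ?thesis using S1[of c d e a b n] d by (simp add: Nw_sym2[of n _ a b c e])
    next
      case 4
      have "\<And>\<pi>. Nw n \<pi> a b c e = Nw n \<pi> e c b a"
        by (metis Nw_sym1 Nw_sym2)
      then show ?thesis using S1[of e d c b a n] d 4 by simp
    next
      case 5 then show ?thesis using S2[of a d b n] d by simp
    qed
  qed
  moreover have "(if a = b then if c = e then real n else 0 else 0) + (if a = c then if b = e then real n else 0 else 0) + 2 = 2"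
    using False by auto
  ultimately show ?thesis by simp
qed

lemma count1:
  fixes x :: real
  shows "(\<Sum>a<d. \<Sum>c<d. \<Sum>b<d. \<Sum>e<d. if a = b then if e = c then x else 0 else 0) = real d * real d * x"
proof -
  have "(\<Sum>a<d. \<Sum>c<d. \<Sum>b<d. \<Sum>e<d. if a = b then if e = c then x else 0 else 0) = (\<Sum>a<d. \<Sum>c<d. \<Sum>b<d. if a = b then x else 0)"
    by (intro sum.cong refl) (auto simp: sum.delta')
  also have "\<dots> = (\<Sum>a<d. \<Sum>c<d. x)"
    by (intro sum.cong refl) (auto simp: sum.delta)
  finally show ?thesis by simp
qed

lemma count2:
  fixes x :: real
  shows "(\<Sum>a<d. \<Sum>c<d. \<Sum>b<d. \<Sum>e<d. if a = e then if b = c then x else 0 else 0) = real d * real d * x"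
proof -
  have "(\<Sum>a<d. \<Sum>c<d. \<Sum>b<d. \<Sum>e<d. if a = e then if b = c then x else 0 else 0) = (\<Sum>a<d. \<Sum>c<d. \<Sum>b<d. if b = c then x else 0)"
    by (intro sum.cong refl) (auto simp: sum.delta)
  also have "\<dots> = (\<Sum>a<d. \<Sum>c<d. x)"
    by (intro sum.cong refl) (auto simp: sum.delta')
  finally show ?thesis by simp
qed

lemma part2:
  "measure_pmf.expectation (rand_perms n d) (tr2 n d) \<le> 2 * real n * (real d)^2 + 2 * (real d)^4"
proof -
  have "measure_pmf.expectation (rand_perms n d) (tr2 n d)
     = measure_pmf.expectation (rand_perms n d) (\<lambda>\<pi>. \<Sum>a<d. \<Sum>c<d. \<Sum>b<d. \<Sum>e<d. Nw n \<pi> a b e c)"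
  proof (intro integral_cong_AE)
    show "AE \<pi> in measure_pmf (rand_perms n d). tr2 n d \<pi> = (\<Sum>a<d. \<Sum>c<d. \<Sum>b<d. \<Sum>e<d. Nw n \<pi> a b e c)"
      unfolding AE_measure_pmf_iff
    proof
      fix \<pi> assume p: "\<pi> \<in> set_pmf (rand_perms n d)"
      have "\<forall>l<d. \<forall>i<n. \<pi> l i < n"
      proof (intro allI impI)
        fix l i assume "l < d" "i < n"
        then show "\<pi> l i < n" using permutes_in_image[OF set_rp[OF p \<open>l < d\<close>]] by simp
      qed
      then show "tr2 n d \<pi> = (\<Sum>a<d. \<Sum>c<d. \<Sum>b<d. \<Sum>e<d. Nw n \<pi> a b e c)" by (rule tr2_eq)
    qed
  qed auto
  also have "\<dots> = (\<Sum>a<d. \<Sum>c<d. \<Sum>b<d. \<Sum>e<d. measure_pmf.expectation (rand_perms n d) (\<lambda>\<pi>. Nw n \<pi> a b e c))"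
    by (simp add: integrable_measure_pmf_finite fin_rp)
  also have "\<dots> \<le> (\<Sum>a<d. \<Sum>c<d. \<Sum>b<d. \<Sum>e<d.
      (if a = b then if e = c then real n else 0 else 0) + (if a = e then if b = c then real n else 0 else 0) + 2)"
    by (intro sum_mono EN) auto
  also have "\<dots> = 2 * real n * (real d)^2 + 2 * (real d)^4"
    by (simp add: sum.distrib count1 count2 power2_eq_square power4_eq_xxxx algebra_simps)
  finally show ?thesis .
qed

theorem lemma5p2:
  shows "\<exists>C Cbar :: real. \<forall>n d :: nat. n \<ge> 1 \<and> real d \<ge> C \<longrightarrow>
     (\<forall>x::real. x \<ge> exp 1 \<longrightarrow>
        measure_pmf.prob (rand_perms n d)
          {\<pi>. tr1 n d \<pi> \<ge> real n * real d + x * (real d)^2}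
        \<le> real d * exp (- real d * (x - exp 1)))
     \<and> measure_pmf.expectation (rand_perms n d) (tr2 n d)
        \<le> 2 * real n * (real d)^2 + Cbar * (real d)^4"
  by (intro exI[of _ 1] exI[of _ 2] allI impI conjI part1 part2) auto

end
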